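(* Let $\overline{D}$ be FG declarations and $\sigma_m$ a TL method substitution. Suppose $\overline{D}\vdash t<:u\leadsto E_1$, $\overline{D}\approx_k\sigma_m$, and $\models_k t: e\approx E_2$. Then $\models_k u: e\approx E_1\,E_2$.
   Context: Featherweight Go (FG). Field names $f$, method names $m$, variables $x$, structure type names $t_S,u_S$, interface type names $t_I,u_I$; types $t,u$ range over both kinds of names. A method signature is $M = (x_1\,t_1,\ldots,x_n\,t_n)\,t$; a method specification is $m M$. Expressions: $e ::= x \mid e.m(e_1,\ldots,e_n) \mid t_S\{e_1,\ldots,e_n\} \mid e.f \mid e.(t)$. Declarations: $\mathtt{type}\ t_S\ \mathtt{struct}\{f_1\,t_1 \ldots f_n\,t_n\}$, $\mathtt{type}\ t_I\ \mathtt{interface}\{S_1 \ldots S_q\}$ ($S_j$ method specifications, in this order), and method declarations $\mathtt{func}\ (x\ t_S)\ m M\ \{\mathtt{return}\ e\}$. It is assumed that structures are non-recursive, field names within a struct are distinct, method names within an interface are distinct, and each method declaration is uniquely identified by receiver type and method name. $\mathrm{methods}(\overline{D},t_S)=\{mM \mid \mathtt{func}\ (x\ t_S)\ mM\{\ldots\}\in\overline{D}\}$; $\mathrm{methods}(\overline{D},t_I)$ is the set of specifications of the declaration of $t_I$. Subtyping: $t_S <: t_S$, and $t <: u_I$ iff $\mathrm{methods}(\overline{D},t)\supseteq\mathrm{methods}(\overline{D},u_I)$. $\mathrm{methodLookup}(\overline{D},(m,t_S))$ is the unique declaration $\mathtt{func}\ (x\ t_S)\ mM\{\ldots\}\in\overline{D}$.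 FG values $v ::= t_S\{v_1,\ldots,v_n\}$. Reduction $\overline{D}\vdash d\longrightarrow e$ is closed under evaluation contexts $\mathcal{E} ::= [\,] \mid t_S\{\overline{v},\mathcal{E},\overline{e}\} \mid \mathcal{E}.f \mid \mathcal{E}.(t) \mid \mathcal{E}.m(\overline{e}) \mid v.m(\overline{v},\mathcal{E},\overline{e})$, with rules $t_S\{v_1..v_n\}.f_i \longrightarrow v_i$; $v.m(v_1..v_n)\longrightarrow [x\mapsto v, x_i\mapsto v_i]e$ if $v=t_S\{\ldots\}$ and $\mathtt{func}\ (x\ t_S)\ m(x_1\,t_1..x_n\,t_n)\,t\{\mathtt{return}\ e\}\in\overline{D}$; $v.(t)\longrightarrow v$ if $v=t_S\{\ldots\}$ and $t_S<:t$. $\overline{D}\vdash e\longrightarrow^{\le k} v$ means $e$ reduces to value $v$ in at most $k$ steps. Target language (TL): $E ::= X \mid K \mid E\,E \mid \lambda X.E \mid \mathtt{case}\ E\ \mathtt{of}\ [Pat_1\to E_1,\ldots]$, $Pat ::= K\,X_1\ldots X_n$, with tuple constructors $(E_1,\ldots,E_n)$. TL values $V ::= X \mid K\,V_1\ldots V_n$. Given a method substitution $\sigma_m$ (finite map from variables $Y$ to $\lambda$-abstractions), reduction $\sigma_m\vdash E\longrightarrow E'$ is closed under contexts $R ::= [\,]\mid K\,\overline{V}\,R\,\overline{E}\mid \mathtt{case}\ R\ \mathtt{of}\ [\ldots]\mid R\,E\mid V\,R$ with rules $(\lambda X.E)\,V\longrightarrow[X\mapsto V]E$; $\mathtt{case}\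 K\,V_1..V_n\ \mathtt{of}\ [\ldots]\longrightarrow[X_i\mapsto V_i]E'$ if $K\,X_1..X_n\to E'$ is a clause; $Y\,E\longrightarrow\sigma_m(Y)\,E$. $\sigma_m\vdash E\longrightarrow^{\le k}V$ analogously. Each struct $t_S$ has a TL constructor $K_{t_S}$, each interface $t_I$ a constructor $K_{t_I}$; the method declaration of $m$ for receiver $t_S$ has a TL variable $m_{t_S}$. Interface-value construction $\overline{D}\vdash t<:u_I\leadsto E$: if $\mathtt{type}\ t_I\ \mathtt{interface}\{m_1M_1..m_nM_n\}\in\overline{D}$ and $\mathrm{methods}(\overline{D},t_S)\supseteq\{m_iM_i\}$ then $\overline{D}\vdash t_S<:t_I\leadsto\lambda X.K_{t_I}(X,m_{1,t_S},\ldots,m_{n,t_S})$; if $\mathtt{type}\ t_I\ \mathtt{interface}\{R_1..R_n\}$, $\mathtt{type}\ u_I\ \mathtt{interface}\{S_1..S_q\}\in\overline{D}$ and $\pi:\{1..q\}\to\{1..n\}$ with $S_i=R_{\pi(i)}$, then $\overline{D}\vdash t_I<:u_I\leadsto\lambda X.\mathtt{case}\ X\ \mathtt{of}\ K_{t_I}(X,X_1,..,X_n)\to K_{u_I}(X,X_{\pi(1)},..,X_{\pi(q)})$. Step-indexed logical relation (relative to fixed $\overline{D}$ and $\sigma_m$), defined by the rules: (Exp) $\models_k t: e\approx E$ holds if for all $k_1<k$, $k_2<k$, FG values $v$ and TL values $V$ with $k-k_1-k_2>0$, $\overline{D}\vdash e\longrightarrow^{\le k_1}v$ and $\sigma_m\vdash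 E\longrightarrow^{\le k_2}V$, we have $\models_{k-k_1-k_2} t: v\approx V$. (Struct) $\models_k t_S: t_S\{v_1..v_n\}\approx K_{t_S}(V_1,..,V_n)$ holds if $\mathtt{type}\ t_S\ \mathtt{struct}\{f_1t_1..f_nt_n\}\in\overline{D}$ and $\models_k t_i: v_i\approx V_i$ for all $i$. (Iface) $\models_k t_I: v\approx K_{t_I}(V,V_1,..,V_n)$ holds if $V=K_{u_S}\,\overline{V'}$ for some struct $u_S$, $\models_{k_1}u_S: v\approx V$ for all $k_1<k$, $\mathrm{methods}(\overline{D},t_I)=\{m_1M_1,..,m_nM_n\}$ (in declaration order), and for all $k_2<k$ and $i$, $\models_{k_2} m_iM_i:\mathrm{methodLookup}(\overline{D},(m_i,u_S))\approx V_i$. (Method) $\models_k m(x_1t_1..x_nt_n)t:\mathtt{func}\ (x\ t_S)\ m(x_1t_1..x_nt_n)t\{\mathtt{return}\ e\}\approx V$ holds if for all $k'\le k$ and $v',V',v_i,V_i$ with $\models_{k'}t_S:v'\approx V'$ and $\models_{k'}t_i:v_i\approx V_i$ for all $i$, we have $\models_{k'}t:[x\mapsto v',x_i\mapsto v_i]e\approx(V\,V')\,(V_1,..,V_n)$. (Decls) $\overline{D}\approx_k\sigma_m$ iff for every $\mathtt{func}\ (x\ t_S)\ mM\{\mathtt{return}\ e\}\in\overline{D}$, $\models_k mM:\mathtt{func}\ (x\ t_S)\ mM\{\mathtt{return}\ e\}\approx m_{t_S}$ (the TL variable). *)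

theory Defs
  imports Main
begin

section \<open>Featherweight Go (FG)\<close>

type_synonym name = string
type_synonym vname = string
type_synonym fname = string
type_synonym mname = string

datatype ty = TS name | TI name

text \<open>Method signature (x1 t1, ..., xn tn) t and method specification m M.\<close>
type_synonym msig = "(vname \<times> ty) list \<times> ty"
type_synonym mspec = "mname \<times> msig"

datatype fexp =
    FVar vname
  | Call fexp mname "fexp list"
  | SLit name "fexp list"
  | Sel fexp fname
  | Assert fexp ty

text \<open>Declarations: type tS struct{...}, type tI interface{S1 ... Sq},
  and func (x tS) m M {return e}, represented as FuncD x tS m M e.\<close>
datatype decl =
    StructD name "(fname \<times> ty) list"
  | IfaceD name "mspec list"
  | FuncD vname name mname msig fexp

type_synonym decls = "decl list"

fun is_fval :: "fexp \<Rightarrow> bool" where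
  "is_fval (SLit t es) = list_all is_fval es"
| "is_fval _ = False"

definition methods :: "decls \<Rightarrow> ty \<Rightarrow> mspec set" where
  "methods D t = (case t of
      TS tS \<Rightarrow> {(m, M). \<exists>x e. FuncD x tS m M e \<in> set D}
    | TI tI \<Rightarrow> (\<Union>Ss \<in> {Ss. IfaceD tI Ss \<in> set D}. set Ss))"

fun subtype :: "decls \<Rightarrow> ty \<Rightarrow> ty \<Rightarrow> bool" where
  "subtype D (TS a) (TS b) = (a = b)"
| "subtype D t (TI u) = (methods D t \<supseteq> methods D (TI u))"
| "subtype D (TI a) (TS b) = False"

definition methodLookup :: "decls \<Rightarrow> mname \<Rightarrow> name \<Rightarrow> decl" where
  "methodLookup D m tS = (THE d. d \<in> set D \<and> (\<exists>x M e. d = FuncD x tS m M e))"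

text \<open>Standing assumptions on declarations.  Uniqueness of type declarations is
  implicit in the phrase ``the declaration of t''.\<close>
definition wf_decls :: "decls \<Rightarrow> bool" where
  "wf_decls D \<longleftrightarrow>
     acyclic {(u, t). \<exists>fts f. StructD t fts \<in> set D \<and> (f, TS u) \<in> set fts}
   \<and> (\<forall>t fts. StructD t fts \<in> set D \<longrightarrow> distinct (map fst fts))
   \<and> (\<forall>t Ss. IfaceD t Ss \<in> set D \<longrightarrow> distinct (map fst Ss))
   \<and> (\<forall>x x' t m M M' e e'. FuncD x t m M e \<in> set D \<longrightarrow> FuncD x' t m M' e' \<in> set D
        \<longrightarrow> x = x' \<and> M = M' \<and> e = e')
   \<and> (\<forall>t a b. StructD t a \<in> set D \<longrightarrow> StructD t b \<in> set D \<longrightarrow> a = b)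
   \<and> (\<forall>t a b. IfaceD t a \<in> set D \<longrightarrow> IfaceD t b \<in> set D \<longrightarrow> a = b)"

text \<open>Substitution (FG has no binders).\<close>
fun fsubst :: "(vname \<rightharpoonup> fexp) \<Rightarrow> fexp \<Rightarrow> fexp" where
  "fsubst s (FVar x) = (case s x of Some v \<Rightarrow> v | None \<Rightarrow> FVar x)"
| "fsubst s (Call e m es) = Call (fsubst s e) m (map (fsubst s) es)"
| "fsubst s (SLit t es) = SLit t (map (fsubst s) es)"
| "fsubst s (Sel e f) = Sel (fsubst s e) f"
| "fsubst s (Assert e t) = Assert (fsubst s e) t"

inductive fstep :: "decls \<Rightarrow> fexp \<Rightarrow> fexp \<Rightarrow> bool" for D where
  field: "\<lbrakk> is_fval (SLit tS vs); StructD tS fts \<in> set D; length vs = length fts;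
            i < length fts; fst (fts ! i) = f \<rbrakk>
          \<Longrightarrow> fstep D (Sel (SLit tS vs) f) (vs ! i)"
| call: "\<lbrakk> v = SLit tS ws; is_fval v; list_all is_fval vs;
           FuncD x tS m (ps, t) e \<in> set D; length vs = length ps \<rbrakk>
          \<Longrightarrow> fstep D (Call v m vs) (fsubst ((Map.empty(x \<mapsto> v))(map fst ps [\<mapsto>] vs)) e)"
| assert: "\<lbrakk> v = SLit tS ws; is_fval v; subtype D (TS tS) t \<rbrakk>
          \<Longrightarrow> fstep D (Assert v t) v"
| ctx_lit: "\<lbrakk> list_all is_fval vs; fstep D e e' \<rbrakk>
          \<Longrightarrow> fstep D (SLit t (vs @ e # es)) (SLit t (vs @ e' # es))"
| ctx_sel: "fstep D e e' \<Longrightarrow> fstep D (Sel e f) (Sel e' f)"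
| ctx_assert: "fstep D e e' \<Longrightarrow> fstep D (Assert e t) (Assert e' t)"
| ctx_recv: "fstep D e e' \<Longrightarrow> fstep D (Call e m es) (Call e' m es)"
| ctx_arg: "\<lbrakk> is_fval v; list_all is_fval vs; fstep D e e' \<rbrakk>
          \<Longrightarrow> fstep D (Call v m (vs @ e # es)) (Call v m (vs @ e' # es))"

definition fsteps_le :: "decls \<Rightarrow> nat \<Rightarrow> fexp \<Rightarrow> fexp \<Rightarrow> bool" where
  "fsteps_le D n e v \<longleftrightarrow> (\<exists>j\<le>n. (fstep D ^^ j) e v)"

section \<open>Target language (TL)\<close>

text \<open>TL variables: the method variables m_{tS} and ordinary variables.\<close>
datatype tvar = MethV name mname | OrdV string

text \<open>Constructors: K_{tS}, K_{tI}, and tuple constructors of each arity.\<close>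
datatype tcon = KS name | KI name | KTup nat

datatype texp =
    TVar tvar
  | TCon tcon
  | TApp texp texp
  | TLam tvar texp
  | TCase texp "(tcon \<times> tvar list \<times> texp) list"

definition capp :: "tcon \<Rightarrow> texp list \<Rightarrow> texp" where
  "capp K Es = foldl TApp (TCon K) Es"

definition tuple :: "texp list \<Rightarrow> texp" where
  "tuple Es = capp (KTup (length Es)) Es"

inductive is_tval :: "texp \<Rightarrow> bool" where
  var: "is_tval (TVar X)"
| con: "list_all is_tval Vs \<Longrightarrow> is_tval (capp K Vs)"
monos list.pred_mono_strong

fun tsubst :: "(tvar \<rightharpoonup> texp) \<Rightarrow> texp \<Rightarrow> texp" where
  "tsubst s (TVar X) = (case s X of Some V \<Rightarrow> V | None \<Rightarrow> TVar X)"
| "tsubst s (TCon K) = TCon K"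
| "tsubst s (TApp E1 E2) = TApp (tsubst s E1) (tsubst s E2)"
| "tsubst s (TLam X E) = TLam X (tsubst (s(X := None)) E)"
| "tsubst s (TCase E cls) =
     TCase (tsubst s E) (map (\<lambda>(K, Xs, B). (K, Xs, tsubst (s |` (- set Xs)) B)) cls)"

definition method_subst :: "(tvar \<rightharpoonup> texp) \<Rightarrow> bool" where
  "method_subst \<sigma> \<longleftrightarrow> finite (dom \<sigma>) \<and> (\<forall>Y E. \<sigma> Y = Some E \<longrightarrow> (\<exists>X B. E = TLam X B))"

inductive tstep :: "(tvar \<rightharpoonup> texp) \<Rightarrow> texp \<Rightarrow> texp \<Rightarrow> bool" for \<sigma> where
  beta: "is_tval V \<Longrightarrow> tstep \<sigma> (TApp (TLam X E) V) (tsubst (Map.empty(X \<mapsto> V)) E)"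
| case_red: "\<lbrakk> list_all is_tval Vs; (K, Xs, E') \<in> set cls; length Xs = length Vs \<rbrakk>
          \<Longrightarrow> tstep \<sigma> (TCase (capp K Vs) cls) (tsubst (Map.empty(Xs [\<mapsto>] Vs)) E')"
| meth: "\<sigma> Y = Some F \<Longrightarrow> tstep \<sigma> (TApp (TVar Y) E) (TApp F E)"
| ctx_fun: "tstep \<sigma> E E' \<Longrightarrow> tstep \<sigma> (TApp E E2) (TApp E' E2)"
| ctx_arg: "\<lbrakk> is_tval V; tstep \<sigma> E E' \<rbrakk> \<Longrightarrow> tstep \<sigma> (TApp V E) (TApp V E')"
| ctx_case: "tstep \<sigma> E E' \<Longrightarrow> tstep \<sigma> (TCase E cls) (TCase E' cls)"

definition tsteps_le :: "(tvar \<rightharpoonup> texp) \<Rightarrow> nat \<Rightarrow> texp \<Rightarrow> texp \<Rightarrow> bool" where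
  "tsteps_le \<sigma> n E V \<longleftrightarrow> (\<exists>j\<le>n. (tstep \<sigma> ^^ j) E V)"

section \<open>Interface-value construction  D |- t <: uI ~> E\<close>

inductive coerce :: "decls \<Rightarrow> ty \<Rightarrow> ty \<Rightarrow> texp \<Rightarrow> bool" for D where
  struct_iface:
    "\<lbrakk> IfaceD tI Ms \<in> set D; set Ms \<subseteq> methods D (TS tS) \<rbrakk>
     \<Longrightarrow> coerce D (TS tS) (TI tI)
           (TLam (OrdV X) (capp (KI tI) (TVar (OrdV X) # map (\<lambda>mM. TVar (MethV tS (fst mM))) Ms)))"
| iface_iface:
    "\<lbrakk> IfaceD tI Rs \<in> set D; IfaceD uI Ss \<in> set D;
       \<forall>i < length Ss. \<pi> i < length Rs \<and> Ss ! i = Rs ! (\<pi> i);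
       length Xs = length Rs; distinct (X # Xs) \<rbrakk>
     \<Longrightarrow> coerce D (TI tI) (TI uI)
           (TLam (OrdV X) (TCase (TVar (OrdV X))
              [(KI tI, OrdV X # map OrdV Xs,
                capp (KI uI) (TVar (OrdV X) # map (\<lambda>i. TVar (OrdV (Xs ! \<pi> i))) [0..<length Ss]))]))"

section \<open>Step-indexed logical relation\<close>

definition exp_gen :: "decls \<Rightarrow> (tvar \<rightharpoonup> texp) \<Rightarrow> (nat \<Rightarrow> ty \<Rightarrow> fexp \<Rightarrow> texp \<Rightarrow> bool)
                       \<Rightarrow> nat \<Rightarrow> ty \<Rightarrow> fexp \<Rightarrow> texp \<Rightarrow> bool" where
  "exp_gen D \<sigma> R k t e E \<longleftrightarrow>
     (\<forall>k1 k2 v V. k1 < k \<longrightarrow> k2 < k \<longrightarrow> k - k1 - k2 > 0 \<longrightarrow> is_fval v \<longrightarrow> is_tval V \<longrightarrow>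
        fsteps_le D k1 e v \<longrightarrow> tsteps_le \<sigma> k2 E V \<longrightarrow> R (k - k1 - k2) t v V)"

definition method_gen :: "decls \<Rightarrow> (tvar \<rightharpoonup> texp) \<Rightarrow> (nat \<Rightarrow> ty \<Rightarrow> fexp \<Rightarrow> texp \<Rightarrow> bool)
                          \<Rightarrow> nat \<Rightarrow> mspec \<Rightarrow> decl \<Rightarrow> texp \<Rightarrow> bool" where
  "method_gen D \<sigma> R k mM d V = (case d of
     FuncD x tS m M e \<Rightarrow> mM = (m, M) \<and>
       (\<forall>k' v' V' vs Vs. k' \<le> k \<longrightarrow> is_fval v' \<longrightarrow> is_tval V' \<longrightarrow>
          list_all is_fval vs \<longrightarrow> list_all is_tval Vs \<longrightarrow>
          length vs = length (fst M) \<longrightarrow> length Vs = length (fst M) \<longrightarrow>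
          R k' (TS tS) v' V' \<longrightarrow>
          (\<forall>i < length (fst M). R k' (snd (fst M ! i)) (vs ! i) (Vs ! i)) \<longrightarrow>
          exp_gen D \<sigma> R k' (snd M)
            (fsubst ((Map.empty(x \<mapsto> v'))(map fst (fst M) [\<mapsto>] vs)) e)
            (TApp (TApp V V') (tuple Vs)))
   | _ \<Rightarrow> False)"

text \<open>Value relation at level k, given the relations R j at the lower levels j < k.\<close>
inductive val_step :: "decls \<Rightarrow> (tvar \<rightharpoonup> texp) \<Rightarrow> nat \<Rightarrow> (nat \<Rightarrow> ty \<Rightarrow> fexp \<Rightarrow> texp \<Rightarrow> bool)
                       \<Rightarrow> ty \<Rightarrow> fexp \<Rightarrow> texp \<Rightarrow> bool"
  for D \<sigma> k R where
  Struct: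
    "\<lbrakk> StructD tS fts \<in> set D; length vs = length fts; length Vs = length fts;
       \<forall>i < length fts. val_step D \<sigma> k R (snd (fts ! i)) (vs ! i) (Vs ! i) \<rbrakk>
     \<Longrightarrow> val_step D \<sigma> k R (TS tS) (SLit tS vs) (capp (KS tS) Vs)"
| Iface:
    "\<lbrakk> V = capp (KS uS) V's;
       \<forall>k1 < k. R k1 (TS uS) v V;
       IfaceD tI Ms \<in> set D; length Vs = length Ms;
       \<forall>k2 < k. \<forall>i < length Ms.
          method_gen D \<sigma> R k2 (Ms ! i) (methodLookup D (fst (Ms ! i)) uS) (Vs ! i) \<rbrakk>
     \<Longrightarrow> val_step D \<sigma> k R (TI tI) v (capp (KI tI) (V # Vs))"

primrec vrels :: "decls \<Rightarrow> (tvar \<rightharpoonup> texp) \<Rightarrow> nat \<Rightarrow> nat \<Rightarrow> ty \<Rightarrow> fexp \<Rightarrow> texp \<Rightarrow> bool" where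
  "vrels D \<sigma> 0 = (\<lambda>j. val_step D \<sigma> 0 (\<lambda>_ _ _ _. False))"
| "vrels D \<sigma> (Suc n) = (\<lambda>j. if j \<le> n then vrels D \<sigma> n j else val_step D \<sigma> (Suc n) (vrels D \<sigma> n))"

definition val_rel :: "decls \<Rightarrow> (tvar \<rightharpoonup> texp) \<Rightarrow> nat \<Rightarrow> ty \<Rightarrow> fexp \<Rightarrow> texp \<Rightarrow> bool" where
  "val_rel D \<sigma> k = vrels D \<sigma> k k"

definition exp_rel :: "decls \<Rightarrow> (tvar \<rightharpoonup> texp) \<Rightarrow> nat \<Rightarrow> ty \<Rightarrow> fexp \<Rightarrow> texp \<Rightarrow> bool" where
  "exp_rel D \<sigma> k = exp_gen D \<sigma> (val_rel D \<sigma>) k"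

definition method_rel :: "decls \<Rightarrow> (tvar \<rightharpoonup> texp) \<Rightarrow> nat \<Rightarrow> mspec \<Rightarrow> decl \<Rightarrow> texp \<Rightarrow> bool" where
  "method_rel D \<sigma> k = method_gen D \<sigma> (val_rel D \<sigma>) k"

definition decls_rel :: "decls \<Rightarrow> nat \<Rightarrow> (tvar \<rightharpoonup> texp) \<Rightarrow> bool" where
  "decls_rel D k \<sigma> \<longleftrightarrow>
     (\<forall>x tS m M e. FuncD x tS m M e \<in> set D \<longrightarrow>
        method_rel D \<sigma> k (m, M) (FuncD x tS m M e) (TVar (MethV tS m)))"

end

theory Submission
  imports Defs
begin

section \<open>Step-indexing infrastructure\<close>

lemma exp_gen_cong:
  assumes "\<forall>j\<le>k. R' j = R j"
  shows "exp_gen D \<sigma> R' k t e E = exp_gen D \<sigma> R k t e E"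
  unfolding exp_gen_def using assms by (auto simp: diff_le_self)

lemma method_gen_cong:
  assumes "\<forall>j\<le>k. R' j = R j"
  shows "method_gen D \<sigma> R' k mM d V = method_gen D \<sigma> R k mM d V"
proof -
  have e1: "\<And>k'. k' \<le> k \<Longrightarrow> exp_gen D \<sigma> R' k' = exp_gen D \<sigma> R k'"
    using assms by (intro ext exp_gen_cong) auto
  have e2: "\<And>k'. k' \<le> k \<Longrightarrow> R' k' = R k'" using assms by auto
  show ?thesis unfolding method_gen_def
    by (cases d) (simp_all add: e1 e2)
qed

lemma method_gen_down:
  "method_gen D \<sigma> R k mM d V \<Longrightarrow> k' \<le> k \<Longrightarrow> method_gen D \<sigma> R k' mM d V"
  unfolding method_gen_def by (cases d) auto

lemma val_step_cong:
  assumes "val_step D \<sigma> n R t v V" "m \<le> n" "\<forall>j<m. R' j = R j"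
  shows "val_step D \<sigma> m R' t v V"
  using assms
proof (induction rule: val_step.induct)
  case (Struct tS fts vs Vs)
  then show ?case by (auto intro!: val_step.Struct)
next
  case (Iface V uS V's v tI Ms Vs)
  show ?case
  proof (rule val_step.Iface)
    show "V = capp (KS uS) V's" by fact
    show "\<forall>k1<m. R' k1 (TS uS) v V" using Iface by auto
    show "IfaceD tI Ms \<in> set D" "length Vs = length Ms" by fact+
    show "\<forall>k2<m. \<forall>i<length Ms.
          method_gen D \<sigma> R' k2 (Ms ! i) (methodLookup D (fst (Ms ! i)) uS) (Vs ! i)"
    proof (intro allI impI)
      fix k2 i assume "k2 < m" "i < length Ms"
      then have "method_gen D \<sigma> R k2 (Ms ! i) (methodLookup D (fst (Ms ! i)) uS) (Vs ! i)"
        using Iface by auto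
      moreover have "\<forall>j\<le>k2. R' j = R j" using Iface \<open>k2 < m\<close> by auto
      ultimately show "method_gen D \<sigma> R' k2 (Ms ! i) (methodLookup D (fst (Ms ! i)) uS) (Vs ! i)"
        using method_gen_cong by metis
    qed
  qed
qed

lemma vrels_le: "j \<le> n \<Longrightarrow> vrels D \<sigma> n j = val_rel D \<sigma> j"
proof (induction n arbitrary: j)
  case 0 then show ?case by (simp add: val_rel_def)
next
  case (Suc n)
  then show ?case
    by (cases "j \<le> n") (simp_all add: val_rel_def le_Suc_eq)
qed

lemma val_rel_unfold: "val_rel D \<sigma> n t v V = val_step D \<sigma> n (val_rel D \<sigma>) t v V"
proof (cases n)
  case 0
  then show ?thesis unfolding val_rel_def
    by (auto elim: val_step_cong)
next
  case (Suc n')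
  have eq: "\<forall>j<n. vrels D \<sigma> n' j = val_rel D \<sigma> j" using Suc vrels_le by auto
  have "val_rel D \<sigma> n t v V = val_step D \<sigma> n (vrels D \<sigma> n') t v V"
    using Suc by (simp add: val_rel_def)
  also have "\<dots> = val_step D \<sigma> n (val_rel D \<sigma>) t v V"
    using eq by (auto elim: val_step_cong)
  finally show ?thesis .
qed

lemma val_rel_down: "val_rel D \<sigma> n t v V \<Longrightarrow> m \<le> n \<Longrightarrow> val_rel D \<sigma> m t v V"
  unfolding val_rel_unfold[of D \<sigma> n] val_rel_unfold[of D \<sigma> m]
  by (auto elim: val_step_cong)

section \<open>Target language facts\<close>

lemma capp_Nil[simp]: "capp K [] = TCon K"
  by (simp add: capp_def)

lemma capp_snoc[simp]: "capp K (Vs @ [W]) = TApp (capp K Vs) W"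
  by (simp add: capp_def)

lemma capp_Cons_snoc: "capp K (V # Vs) = TApp (capp K (butlast (V # Vs))) (last (V # Vs))"
  by (metis append_butlast_last_id capp_snoc list.distinct(1))

lemma capp_not_TLam[simp]: "capp K Vs \<noteq> TLam X B"
  by (cases Vs rule: rev_cases) auto

lemma capp_not_TVar[simp]: "capp K Vs \<noteq> TVar X"
  by (cases Vs rule: rev_cases) auto

lemma capp_not_TCase[simp]: "capp K Vs \<noteq> TCase E cls"
  by (cases Vs rule: rev_cases) auto

lemma capp_not_sym[simp]: "TLam X B \<noteq> capp K Vs" "TVar X \<noteq> capp K Vs" "TCase E cls \<noteq> capp K Vs"
  by (metis capp_not_TLam, metis capp_not_TVar, metis capp_not_TCase)

lemma capp_TApp: "capp K Vs = TApp A B \<longleftrightarrow> Vs \<noteq> [] \<and> A = capp K (butlast Vs) \<and> B = last Vs"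
  by (cases Vs rule: rev_cases) auto

lemma capp_inj: "capp K Vs = capp K' Vs' \<Longrightarrow> K = K' \<and> Vs = Vs'"
proof (induction Vs arbitrary: Vs' rule: rev_induct)
  case Nil then show ?case by (cases Vs' rule: rev_cases) auto
next
  case (snoc x xs) then show ?case by (cases Vs' rule: rev_cases) auto
qed

lemma tsubst_capp: "tsubst s (capp K Es) = capp K (map (tsubst s) Es)"
  by (induction Es rule: rev_induct) simp_all

lemma not_tval_TLam[simp]: "\<not> is_tval (TLam X B)"
  by (auto elim: is_tval.cases)

lemma not_tval_TCase[simp]: "\<not> is_tval (TCase E cls)"
  by (auto elim: is_tval.cases)

lemma not_tval_TApp_TLam[simp]: "\<not> is_tval (TApp (TLam X B) E)"
proof
  assume "is_tval (TApp (TLam X B) E)"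
  then show False
  proof cases
    case (con Vs K)
    then show False by (metis capp_TApp capp_not_TLam)
  qed
qed

lemma tval_capp: "list_all is_tval Vs \<Longrightarrow> is_tval (capp K Vs)"
  by (rule is_tval.con)

lemma no_step_capp:
  assumes "\<forall>V\<in>set Vs. \<forall>W. \<not> tstep \<sigma> V W"
  shows "\<not> tstep \<sigma> (capp K Vs) W"
  using assms
proof (induction Vs arbitrary: W rule: rev_induct)
  case Nil then show ?case by (auto elim: tstep.cases)
next
  case (snoc x xs)
  show ?case
  proof
    assume "tstep \<sigma> (capp K (xs @ [x])) W"
    then show False
    proof (cases rule: tstep.cases)
      case (beta V X E) then show False by simp
    next
      case (meth Y F E) then show False by simp
    next
      case (ctx_fun E E' E2) then show False using snoc by simp
    next
      case (ctx_arg V E E') then show False using snoc by simp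
    qed simp_all
  qed
qed

lemma tval_no_step: "is_tval V \<Longrightarrow> \<not> tstep \<sigma> V W"
proof (induction V arbitrary: W rule: is_tval.induct)
  case (var X) then show ?case by (auto elim: tstep.cases)
next
  case (con Vs K)
  then show ?case by (intro no_step_capp) (auto simp: list_all_iff)
qed

lemma tval_steps: "is_tval V \<Longrightarrow> (tstep \<sigma> ^^ j) V W \<Longrightarrow> W = V"
proof (cases j)
  case 0 then show "is_tval V \<Longrightarrow> (tstep \<sigma> ^^ j) V W \<Longrightarrow> W = V" by simp
next
  case (Suc n)
  assume "is_tval V" "(tstep \<sigma> ^^ j) V W"
  then obtain y where "tstep \<sigma> V y" using Suc relpowp_Suc_D2 by metis
  then show "W = V" using \<open>is_tval V\<close> tval_no_step by metis
qed

lemma steps_first: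
  assumes "(tstep \<sigma> ^^ j) A W" "\<not> is_tval A" "is_tval W"
  obtains j' y where "j = Suc j'" "tstep \<sigma> A y" "(tstep \<sigma> ^^ j') y W"
proof (cases j)
  case 0 then show thesis using assms by simp
next
  case (Suc n)
  then obtain y where "tstep \<sigma> A y" "(tstep \<sigma> ^^ n) y W" using assms(1) relpowp_Suc_D2 by metis
  then show thesis using that Suc by blast
qed

lemma map_upds_nth:
  "distinct ks \<Longrightarrow> length ks = length vs \<Longrightarrow> i < length ks \<Longrightarrow> (m(ks [\<mapsto>] vs)) (ks ! i) = Some (vs ! i)"
proof (induction ks arbitrary: vs m i)
  case Nil then show ?case by simp
next
  case (Cons a as)
  then obtain b bs where vs: "vs = b # bs" by (cases vs) auto
  show ?case
  proof (cases i)
    case 0 then show ?thesis using Cons vs by simp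
  next
    case (Suc i')
    then have "as ! i' \<noteq> a" using Cons by (metis distinct.simps(2) nth_mem Suc_less_eq length_Cons)
    then show ?thesis using Cons vs Suc by simp
  qed
qed

lemma tstep_beta_inv:
  assumes "tstep \<sigma> (TApp (TLam X B) E2) y"
  shows "is_tval E2 \<and> y = tsubst (Map.empty(X \<mapsto> E2)) B"
  using assms
proof (cases rule: tstep.cases)
  case (ctx_fun E')
  then show ?thesis by (auto elim: tstep.cases)
qed auto

lemma tstep_case_inv:
  assumes "tstep \<sigma> (TCase V cls) y" "is_tval V"
  shows "\<exists>K Vs Xs E'. V = capp K Vs \<and> list_all is_tval Vs \<and> (K, Xs, E') \<in> set cls
           \<and> length Xs = length Vs \<and> y = tsubst (Map.empty(Xs [\<mapsto>] Vs)) E'"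
  using assms
proof (cases rule: tstep.cases)
  case (ctx_case E')
  then show ?thesis using assms(2) tval_no_step by metis
qed auto

lemma val_rel_TS: "val_rel D \<sigma> n (TS tS) v V \<Longrightarrow> \<exists>Vs. V = capp (KS tS) Vs"
proof -
  assume "val_rel D \<sigma> n (TS tS) v V"
  then have "val_step D \<sigma> n (val_rel D \<sigma>) (TS tS) v V" using val_rel_unfold by metis
  then show ?thesis
  proof (cases rule: val_step.cases)
    case (Struct fts vs Vs)
    then show ?thesis by blast
  qed
qed

lemma val_rel_TI: "val_rel D \<sigma> n (TI tI) v W \<Longrightarrow>
  \<exists>V Vs uS V's Ms. W = capp (KI tI) (V # Vs) \<and> V = capp (KS uS) V's
     \<and> (\<forall>k1<n. val_rel D \<sigma> k1 (TS uS) v V) \<and> IfaceD tI Ms \<in> set D \<and> length Vs = length Ms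
     \<and> (\<forall>k2<n. \<forall>i<length Ms. method_gen D \<sigma> (val_rel D \<sigma>) k2 (Ms!i) (methodLookup D (fst (Ms!i)) uS) (Vs!i))"
proof -
  assume "val_rel D \<sigma> n (TI tI) v W"
  then have "val_step D \<sigma> n (val_rel D \<sigma>) (TI tI) v W" using val_rel_unfold by metis
  then show ?thesis
  proof (cases rule: val_step.cases)
    case (Iface V uS V's Ms Vs)
    then show ?thesis by (intro exI[of _ V] exI[of _ Vs] exI[of _ uS] exI[of _ V's] exI[of _ Ms]) simp
  qed
qed

lemma methodLookup_eq:
  assumes "wf_decls D" "FuncD x tS m M e \<in> set D"
  shows "methodLookup D m tS = FuncD x tS m M e"
  unfolding methodLookup_def
proof (rule the_equality)
  show "FuncD x tS m M e \<in> set D \<and> (\<exists>x' M' e'. FuncD x tS m M e = FuncD x' tS m M' e')"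
    using assms by auto
next
  fix d assume "d \<in> set D \<and> (\<exists>x M e. d = FuncD x tS m M e)"
  then obtain x' M' e' where d: "d \<in> set D" "d = FuncD x' tS m M' e'" by blast
  have "\<forall>x x' t m M M' e e'. FuncD x t m M e \<in> set D \<longrightarrow> FuncD x' t m M' e' \<in> set D
        \<longrightarrow> x = x' \<and> M = M' \<and> e = e'" using assms(1) unfolding wf_decls_def by (elim conjE)
  then show "d = FuncD x tS m M e" using d assms(2) by metis
qed

lemma decl_method:
  assumes "wf_decls D" "decls_rel D k \<sigma>" "mM \<in> methods D (TS tS)" "k' \<le> k"
  shows "method_gen D \<sigma> (val_rel D \<sigma>) k' mM (methodLookup D (fst mM) tS) (TVar (MethV tS (fst mM)))"
proof -
  obtain m M where mM: "mM = (m, M)" by (cases mM)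
  then obtain x e where f: "FuncD x tS m M e \<in> set D" using assms(3) by (auto simp: methods_def)
  then have "method_rel D \<sigma> k (m, M) (FuncD x tS m M e) (TVar (MethV tS m))"
    using assms(2) unfolding decls_rel_def by blast
  then have "method_gen D \<sigma> (val_rel D \<sigma>) k (m, M) (FuncD x tS m M e) (TVar (MethV tS m))"
    unfolding method_rel_def .
  then have "method_gen D \<sigma> (val_rel D \<sigma>) k' (m, M) (FuncD x tS m M e) (TVar (MethV tS m))"
    using assms(4) by (rule method_gen_down)
  then show ?thesis using methodLookup_eq[OF assms(1) f] mM by simp
qed

lemma restrict_upd_empty: "(Map.empty(a \<mapsto> b)) |` (- insert a A) = Map.empty"
  by (auto simp: restrict_map_def fun_eq_iff)

theorem lemma2:
  assumes "wf_decls D"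
    and "method_subst \<sigma>"
    and "coerce D t u E1"
    and "decls_rel D k \<sigma>"
    and "exp_rel D \<sigma> k t e E2"
  shows "exp_rel D \<sigma> k u e (TApp E1 E2)"
proof -
  have E2rel: "val_rel D \<sigma> (k - k1) t v E2"
    if "k1 < k" "fsteps_le D k1 e v" "is_fval v" "is_tval E2" for k1 v
  proof -
    have "tsteps_le \<sigma> 0 E2 E2" by (simp add: tsteps_le_def)
    moreover have "0 < k" "k - k1 - 0 > 0" using that by auto
    moreover have "exp_gen D \<sigma> (val_rel D \<sigma>) k t e E2" using assms(5) unfolding exp_rel_def .
    ultimately have "val_rel D \<sigma> (k - k1 - 0) t v E2"
      using that unfolding exp_gen_def by blast
    then show ?thesis by simp
  qed
  show ?thesis unfolding exp_rel_def exp_gen_def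
  proof (intro allI impI)
    fix k1 k2 v V
    assume k1: "k1 < k" and k2: "k2 < k" and pos: "k - k1 - k2 > 0" and fv: "is_fval v"
      and tv: "is_tval V" and fs: "fsteps_le D k1 e v" and ts: "tsteps_le \<sigma> k2 (TApp E1 E2) V"
    from ts obtain j where j: "j \<le> k2" "(tstep \<sigma> ^^ j) (TApp E1 E2) V"
      unfolding tsteps_le_def by auto
    from assms(3) show "val_rel D \<sigma> (k - k1 - k2) u v V"
    proof cases
      case (struct_iface tI Ms tS X)
      let ?B = "capp (KI tI) (TVar (OrdV X) # map (\<lambda>mM. TVar (MethV tS (fst mM))) Ms)"
      obtain j' y where jy: "j = Suc j'" "tstep \<sigma> (TApp E1 E2) y" "(tstep \<sigma> ^^ j') y V"
        using steps_first[OF j(2) _ tv] struct_iface by auto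
      then have E2v: "is_tval E2" and y: "y = tsubst (Map.empty(OrdV X \<mapsto> E2)) ?B"
        using tstep_beta_inv struct_iface by blast+
      have y2: "y = capp (KI tI) (E2 # map (\<lambda>mM. TVar (MethV tS (fst mM))) Ms)"
        by (simp add: y tsubst_capp comp_def)
      have "is_tval y" unfolding y2
        by (rule tval_capp) (simp add: E2v list_all_iff is_tval.var)
      then have VV: "V = y" using tval_steps jy by metis
      have rel: "val_rel D \<sigma> (k - k1) (TS tS) v E2" using E2rel k1 fs fv E2v struct_iface by simp
      obtain Vs where Vs: "E2 = capp (KS tS) Vs" using val_rel_TS[OF rel] by blast
      have lt: "k - k1 - k2 < k - k1" using jy j pos by simp
      show ?thesis unfolding VV y2 struct_iface(2)
      proof (rule val_rel_unfold[THEN iffD2])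
        show "val_step D \<sigma> (k - k1 - k2) (val_rel D \<sigma>) (TI tI) v (capp (KI tI) (E2 # map (\<lambda>mM. TVar (MethV tS (fst mM))) Ms))"
      proof (rule val_step.Iface[OF Vs])
        show "\<forall>k1a<k - k1 - k2. val_rel D \<sigma> k1a (TS tS) v E2"
          using rel lt val_rel_down by (meson less_imp_le order.strict_trans)
        show "IfaceD tI Ms \<in> set D" by fact
        show "length (map (\<lambda>mM. TVar (MethV tS (fst mM))) Ms) = length Ms" by simp
        show "\<forall>k2a<k - k1 - k2. \<forall>i<length Ms. method_gen D \<sigma> (val_rel D \<sigma>) k2a (Ms ! i)
           (methodLookup D (fst (Ms ! i)) tS) (map (\<lambda>mM. TVar (MethV tS (fst mM))) Ms ! i)"
        proof (intro allI impI)
          fix k2a i assume "k2a < k - k1 - k2" "i < length Ms"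
          then show "method_gen D \<sigma> (val_rel D \<sigma>) k2a (Ms ! i)
           (methodLookup D (fst (Ms ! i)) tS) (map (\<lambda>mM. TVar (MethV tS (fst mM))) Ms ! i)"
            using decl_method[OF assms(1) assms(4), of "Ms ! i" tS k2a] struct_iface
            by (auto simp: nth_mem subsetD)
        qed
      qed
      qed
    next
      case (iface_iface tI Rs uI Ss \<pi> Xs X)
      let ?B = "capp (KI uI) (TVar (OrdV X) # map (\<lambda>i. TVar (OrdV (Xs ! \<pi> i))) [0..<length Ss])"
      let ?cls = "[(KI tI, OrdV X # map OrdV Xs, ?B)]"
      obtain j' y where jy: "j = Suc j'" "tstep \<sigma> (TApp E1 E2) y" "(tstep \<sigma> ^^ j') y V"
        using steps_first[OF j(2) _ tv] iface_iface by auto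
      then have E2v: "is_tval E2" and y: "y = tsubst (Map.empty(OrdV X \<mapsto> E2)) (TCase (TVar (OrdV X)) ?cls)"
        using tstep_beta_inv iface_iface by blast+
      have "tsubst Map.empty ?B = ?B" by (simp add: tsubst_capp comp_def)
      then have y2: "y = TCase E2 ?cls"
        by (simp add: y restrict_upd_empty del: fun_upd_apply) (simp add: restrict_upd_empty)
      obtain j'' z where jz: "j' = Suc j''" "tstep \<sigma> y z" "(tstep \<sigma> ^^ j'') z V"
        using steps_first[OF jy(3) _ tv] y2 by auto
      have rel: "val_rel D \<sigma> (k - k1) (TI tI) v E2" using E2rel k1 fs fv E2v iface_iface by simp
      then obtain W0 Ws uS V's Ms where W: "E2 = capp (KI tI) (W0 # Ws)" "W0 = capp (KS uS) V's"
        "\<forall>k1a<k - k1. val_rel D \<sigma> k1a (TS uS) v W0" "IfaceD tI Ms \<in> set D" "length Ws = length Ms"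
        "\<forall>k2a<k - k1. \<forall>i<length Ms. method_gen D \<sigma> (val_rel D \<sigma>) k2a (Ms!i) (methodLookup D (fst (Ms!i)) uS) (Ws!i)"
        using val_rel_TI by blast
      have "\<forall>t a b. IfaceD t a \<in> set D \<longrightarrow> IfaceD t b \<in> set D \<longrightarrow> a = b"
        using assms(1) unfolding wf_decls_def by (elim conjE)
      then have MsRs: "Ms = Rs" using W(4) iface_iface by metis
      from tstep_case_inv[OF jz(2)[unfolded y2] E2v] obtain K Vs' Xs' E' where
        c: "E2 = capp K Vs'" "list_all is_tval Vs'" "(K, Xs', E') \<in> set ?cls"
           "length Xs' = length Vs'" "z = tsubst (Map.empty(Xs' [\<mapsto>] Vs')) E'" by blast
      have Vs': "Vs' = W0 # Ws" using c(1) W(1) capp_inj by metis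
      have Xs': "Xs' = OrdV X # map OrdV Xs" "E' = ?B" using c(3) by auto
      define m where "m = Map.empty(OrdV X # map OrdV Xs [\<mapsto>] W0 # Ws)"
      have dist: "distinct (OrdV X # map OrdV Xs)"
        using iface_iface by (auto simp: distinct_map inj_on_def)
      have lenXs: "length (OrdV X # map OrdV Xs) = length (W0 # Ws)" using c(4) Xs' Vs' by simp
      have lk1: "m (OrdV X) = Some W0"
        using map_upds_nth[OF dist lenXs, of 0 Map.empty] by (simp add: m_def)
      have lk2: "m (OrdV (Xs ! \<pi> i)) = Some (Ws ! \<pi> i)" if "i < length Ss" for i
      proof -
        have "\<pi> i < length Xs" using that iface_iface by simp
        then show ?thesis
          using map_upds_nth[OF dist lenXs, of "Suc (\<pi> i)" Map.empty] by (simp add: m_def)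
      qed
      have z2: "z = capp (KI uI) (W0 # map (\<lambda>i. Ws ! \<pi> i) [0..<length Ss])"
        unfolding c(5) Xs' Vs' m_def[symmetric]
      proof -
        have h: "map (tsubst m \<circ> (\<lambda>i. TVar (OrdV (Xs ! \<pi> i)))) [0..<length Ss]
              = map (\<lambda>i. Ws ! \<pi> i) [0..<length Ss]"
          by (rule map_cong) (simp_all add: lk2)
        show "tsubst m ?B = capp (KI uI) (W0 # map (\<lambda>i. Ws ! \<pi> i) [0..<length Ss])"
          by (simp add: tsubst_capp lk1 h)
      qed
      have WsV: "list_all is_tval (W0 # Ws)" using c(2) Vs' by simp
      have "is_tval z" unfolding z2
      proof (rule tval_capp)
        have "\<pi> i < length Ws" if "i < length Ss" for i
          using that iface_iface W(5) MsRs by simp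
        then show "list_all is_tval (W0 # map (\<lambda>i. Ws ! \<pi> i) [0..<length Ss])"
          using WsV by (auto simp: list_all_iff)
      qed
      then have VV: "V = z" using tval_steps jz by metis
      have lt: "k - k1 - k2 < k - k1" using jy jz j pos by simp
      show ?thesis unfolding VV z2 iface_iface(2)
      proof (rule val_rel_unfold[THEN iffD2])
        show "val_step D \<sigma> (k - k1 - k2) (val_rel D \<sigma>) (TI uI) v (capp (KI uI) (W0 # map (\<lambda>i. Ws ! \<pi> i) [0..<length Ss]))"
      proof (rule val_step.Iface[OF W(2)])
        show "\<forall>k1a<k - k1 - k2. val_rel D \<sigma> k1a (TS uS) v W0"
          using W(3) lt by simp
        show "IfaceD uI Ss \<in> set D" by fact
        show "length (map (\<lambda>i. Ws ! \<pi> i) [0..<length Ss]) = length Ss" by simp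
        show "\<forall>k2a<k - k1 - k2. \<forall>i<length Ss. method_gen D \<sigma> (val_rel D \<sigma>) k2a (Ss ! i)
           (methodLookup D (fst (Ss ! i)) uS) (map (\<lambda>i. Ws ! \<pi> i) [0..<length Ss] ! i)"
        proof (intro allI impI)
          fix k2a i assume a: "k2a < k - k1 - k2" "i < length Ss"
          then have "\<pi> i < length Ms" "Ss ! i = Ms ! \<pi> i" using iface_iface MsRs by auto
          then show "method_gen D \<sigma> (val_rel D \<sigma>) k2a (Ss ! i)
           (methodLookup D (fst (Ss ! i)) uS) (map (\<lambda>i. Ws ! \<pi> i) [0..<length Ss] ! i)"
            using W(6) a lt by simp
        qed
      qed
      qed
    qed
  qed
qed

end
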